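(* Let $t$ be a term such that $t\to_h^{(b,e,m)}u$ with $u\in\mathcal{M}$ (a head-reduction sequence with exactly $b$ steps of kind (b), $e$ steps of kind (e) and $m$ steps of kind (m)). Then there exists a tight derivation $\Phi\triangleright\Gamma\vdash^{(b,e,m,|u|)}t:\mathtt{t}$ in system $\mathscr{E}$, for some context $\Gamma$ and tight type $\mathtt{t}$.
   Context: Pair pattern calculus: patterns $p,q ::= x\mid\langle p,q\rangle$ (linear); $\mathrm{var}(p)$ = variables of $p$; $p\# q$ means disjoint variables. Terms $t,u ::= x\mid\lambda p.t\mid\langle t,u\rangle\mid t\,u\mid t[p/u]$, $\mathrm{var}(p)$ bound in $t$ in $\lambda p.t$ and $t[p/u]$; $\mathrm{fv}$ as usual; terms modulo $\alpha$. List contexts $L::=\Box\mid L[p/u]$, $L\langle t\rangle$ plugging (possibly capturing), $\mathrm{bv}(L)$ variables bound by $L$; $t\{x/u\}$ capture-avoiding substitution; $\mathrm{abs}(t)$ iff $t=L\langle\lambda p.u\rangle$. Head reduction ($t\not\to_h$: no $u$ with $t\to_h u$): (b) $L\langle\lambda p.t\rangle u\to_h L\langle t[p/u]\rangle$ if $\mathrm{bv}(L)\cap\mathrm{fv}(u)=\emptyset$; (m) $t[\langle p_1,p_2\rangle/L\langle\langle u_1,u_2\rangle\rangle]\to_h L\langle t[p_1/u_1][p_2/u_2]\rangle$ if $t\not\to_h$ and $\mathrm{bv}(L)\cap\mathrm{fv}(t)=\emptyset$; (e) $t[x/u]\to_h t\{x/u\}$ if $t\not\to_h$; closure: $\lambda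 p.t\to_h\lambda p.t'$ if $t\to_h t'$; $tu\to_h t'u$ if $t\to_h t'$ and not $\mathrm{abs}(t)$; $t[p/u]\to_h t'[p/u]$ if $t\to_h t'$; $t[p/u]\to_h t[p/u']$ if $t\not\to_h$, $p$ not a variable, $u\to_h u'$. The kind of a step is the base rule (b), (e) or (m) it uses. Canonical forms $\mathcal{M} ::= \lambda p.\mathcal{M}\mid\langle t,t\rangle\mid\mathcal{M}[\langle p_1,p_2\rangle/\mathcal{N}]\mid\mathcal{N}$, $\mathcal{N} ::= x\mid\mathcal{N}\,t\mid\mathcal{N}[\langle p_1,p_2\rangle/\mathcal{N}]$, with size $|x|=0$, $|\langle t,u\rangle|=1$, $|\mathcal{N}t|=|\mathcal{N}|+1$, $|\lambda p.\mathcal{M}|=|\mathcal{M}|+1$, $|\mathcal{M}[\langle p_1,p_2\rangle/\mathcal{N}]|=|\mathcal{M}|+|\mathcal{N}|+1$. System $\mathscr{E}$. Types: tight types $\mathtt{t} ::= \bullet_{\mathcal{N}}\mid\bullet_{\mathcal{M}}$; types $\sigma ::= \mathtt{t}\mid \mathcal{A}_1\times\mathcal{A}_2\mid \mathcal{A}\to\sigma$; multi-types $\mathcal{A} ::= [\sigma_k]_{k\in K}$ (finite, possibly empty). Contexts map variables to multi-types, $\mathrm{dom}(\Gamma)$ = variables with non-empty multi-type; $\wedge$ pointwise multiset union; $\Gamma|_p$ restriction to $\mathrm{var}(p)$; $\Gamma\setminus\mathrm{var}(p)$ removal. $\mathrm{tight}(\sigma)$ iff $\sigma\in\{\bullet_{\mathcal{N}},\bullet_{\mathcal{M}}\}$,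 extended elementwise. Rules: (pat_v) $x:\mathcal{A}\Vdash^{(1,0,0)} x:\mathcal{A}$. (pat_×) from $\Gamma\Vdash^{(e_p,m_p,f_p)}p:\mathcal{A}$, $\Delta\Vdash^{(e_q,m_q,f_q)}q:\mathcal{B}$, $p\#q$ infer $\Gamma\wedge\Delta\Vdash^{(e_p+e_q,1+m_p+m_q,f_p+f_q)}\langle p,q\rangle:[\mathcal{A}\times\mathcal{B}]$. (pat_p) if $\mathrm{dom}(\Gamma)\subseteq\mathrm{var}(\langle p,q\rangle)$ and $\mathrm{tight}(\Gamma)$ then $\Gamma\Vdash^{(0,0,1)}\langle p,q\rangle:[\bullet_{\mathcal{N}}]$. (ax) $x:[\sigma]\vdash^{(0,0,0,0)}x:\sigma$. (abs) from $\Gamma\vdash^{(b,e,m,f)}t:\sigma$ and $\Gamma|_p\Vdash^{(e_p,m_p,f_p)}p:\mathcal{A}$ infer $\Gamma\setminus\mathrm{var}(p)\vdash^{(b+1,e+e_p,m+m_p,f+f_p)}\lambda p.t:\mathcal{A}\to\sigma$. (abs_p) from $\Gamma\vdash^{(b,e,m,f)}t:\mathtt{t}$ ($\mathtt{t}$ tight) and $\mathrm{tight}(\Gamma|_p)$ infer $\Gamma\setminus\mathrm{var}(p)\vdash^{(b,e,m,f+1)}\lambda p.t:\bullet_{\mathcal{M}}$. (many) from $(\Gamma_k\vdash^{(b_k,e_k,m_k,f_k)}t:\sigma_k)_{k\in K}$ infer $\wedge_k\Gamma_k\vdash^{(\sum b_k,\sum e_k,\sum m_k,\sum f_k)}t:[\sigma_k]_{k\in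 K}$. (app) from $\Gamma\vdash^{(b_t,e_t,m_t,f_t)}t:\mathcal{A}\to\sigma$, $\Delta\vdash^{(b_u,e_u,m_u,f_u)}u:\mathcal{A}$ infer $\Gamma\wedge\Delta\vdash^{(b_t+b_u,e_t+e_u,m_t+m_u,f_t+f_u)}t\,u:\sigma$. (app_p) from $\Gamma\vdash^{(b,e,m,f)}t:\bullet_{\mathcal{N}}$ infer $\Gamma\vdash^{(b,e,m,f+1)}t\,u:\bullet_{\mathcal{N}}$. (pair) from $\Gamma\vdash^{(b_t,e_t,m_t,f_t)}t:\mathcal{A}$, $\Delta\vdash^{(b_u,e_u,m_u,f_u)}u:\mathcal{B}$ infer $\Gamma\wedge\Delta\vdash^{(b_t+b_u,e_t+e_u,m_t+m_u,f_t+f_u)}\langle t,u\rangle:\mathcal{A}\times\mathcal{B}$. (pair_p) $\vdash^{(0,0,0,1)}\langle t,u\rangle:\bullet_{\mathcal{M}}$. (match) from $\Gamma\vdash^{(b_t,e_t,m_t,f_t)}t:\sigma$, $\Gamma|_p\Vdash^{(e_p,m_p,f_p)}p:\mathcal{A}$, $\Delta\vdash^{(b_u,e_u,m_u,f_u)}u:\mathcal{A}$ infer $(\Gamma\setminus\mathrm{var}(p))\wedge\Delta\vdash^{(b_t+b_u,e_t+e_u+e_p,m_t+m_u+m_p,f_t+f_u+f_p)}t[p/u]:\sigma$. A derivation is tight if its context and its type are tight. *)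

theory Defs
  imports Main "HOL-Library.Multiset"
begin

text \<open>Pair pattern calculus, terms modulo alpha represented with de Bruijn indices. Convention: under a binder for the pattern PP p q,
  the indices 0 .. nv p - 1 denote the variables of p (recursively, same convention)
  and the indices nv p .. nv p + nv q - 1 denote those of q; larger indices are free
  variables (shifted by nv (PP p q)). Linearity is automatic.\<close>

datatype pat = PV | PP pat pat

fun nv :: "pat \<Rightarrow> nat" where
  "nv PV = 1"
| "nv (PP p q) = nv p + nv q"

text \<open>Sub t p u stands for the explicit matching t[p/u]; the variables of p are bound in t.\<close>
datatype trm = Var nat | Lam pat trm | Pair trm trm | App trm trm | Sub trm pat trm

fun shift :: "nat \<Rightarrow> nat \<Rightarrow> trm \<Rightarrow> trm" where
  "shift k c (Var i) = Var (if i < c then i else i + k)"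
| "shift k c (Lam p t) = Lam p (shift k (c + nv p) t)"
| "shift k c (Pair t u) = Pair (shift k c t) (shift k c u)"
| "shift k c (App t u) = App (shift k c t) (shift k c u)"
| "shift k c (Sub t p u) = Sub (shift k (c + nv p) t) p (shift k c u)"

fun subst :: "nat \<Rightarrow> trm \<Rightarrow> trm \<Rightarrow> trm" where
  "subst c s (Var i) = (if i < c then Var i else if i = c then shift c 0 s else Var (i - 1))"
| "subst c s (Lam p t) = Lam p (subst (c + nv p) s t)"
| "subst c s (Pair t u) = Pair (subst c s t) (subst c s u)"
| "subst c s (App t u) = App (subst c s t) (subst c s u)"
| "subst c s (Sub t p u) = Sub (subst (c + nv p) s t) p (subst c s u)"

text \<open>List contexts L ::= Box | L[p/u], as a list with the outermost substitution first.\<close>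
type_synonym lctx = "(pat \<times> trm) list"

fun plug :: "lctx \<Rightarrow> trm \<Rightarrow> trm" where
  "plug [] t = t"
| "plug ((p, w) # L) t = Sub (plug L t) p w"

definition nbv :: "lctx \<Rightarrow> nat" where
  "nbv L = sum_list (map (nv \<circ> fst) L)"

definition is_abs :: "trm \<Rightarrow> bool" where
  "is_abs t \<longleftrightarrow> (\<exists>L p s. t = plug L (Lam p s))"

datatype kind = KB | KE | KM

text \<open>The side conditions bv(L) \<inter> fv(...) = {} are always satisfiable modulo alpha;
  in de Bruijn form they become the shifts below.\<close>
fun hred :: "trm \<Rightarrow> (kind \<times> trm) set" where
  "hred (Var x) = {}"
| "hred (Pair t u) = {}"
| "hred (Lam p t) = {(k, Lam p t') | k t'. (k, t') \<in> hred t}"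
| "hred (App s u) =
     {(KB, plug L (Sub t p (shift (nbv L) 0 u))) | L p t. s = plug L (Lam p t)}
     \<union> (if is_abs s then {} else {(k, App s' u) | k s'. (k, s') \<in> hred s})"
| "hred (Sub t PV u) =
     (if hred t = {} then {(KE, subst 0 u t)} else {})
     \<union> {(k, Sub t' PV u) | k t'. (k, t') \<in> hred t}"
| "hred (Sub t (PP p1 p2) u) =
     (if hred t = {} then
        {(KM, plug L (Sub (Sub (shift (nbv L) (nv p1 + nv p2) t) p1 (shift (nv p2) 0 u1)) p2 u2))
          | L u1 u2. u = plug L (Pair u1 u2)}
      else {})
     \<union> {(k, Sub t' (PP p1 p2) u) | k t'. (k, t') \<in> hred t}
     \<union> (if hred t = {} then {(k, Sub t (PP p1 p2) u') | k u'. (k, u') \<in> hred u} else {})"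

inductive hsteps :: "trm \<Rightarrow> nat \<Rightarrow> nat \<Rightarrow> nat \<Rightarrow> trm \<Rightarrow> bool" where
  hs_refl: "hsteps t 0 0 0 t"
| hs_B: "(KB, t') \<in> hred t \<Longrightarrow> hsteps t' b e m u \<Longrightarrow> hsteps t (Suc b) e m u"
| hs_E: "(KE, t') \<in> hred t \<Longrightarrow> hsteps t' b e m u \<Longrightarrow> hsteps t b (Suc e) m u"
| hs_M: "(KM, t') \<in> hred t \<Longrightarrow> hsteps t' b e m u \<Longrightarrow> hsteps t b e (Suc m) u"

inductive canM :: "trm \<Rightarrow> bool" and canN :: "trm \<Rightarrow> bool" where
  cM_lam: "canM t \<Longrightarrow> canM (Lam p t)"
| cM_pair: "canM (Pair t u)"
| cM_sub: "canM t \<Longrightarrow> canN n \<Longrightarrow> canM (Sub t (PP p1 p2) n)"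
| cM_N: "canN n \<Longrightarrow> canM n"
| cN_var: "canN (Var x)"
| cN_app: "canN n \<Longrightarrow> canN (App n t)"
| cN_sub: "canN n \<Longrightarrow> canN n' \<Longrightarrow> canN (Sub n (PP p1 p2) n')"

text \<open>Size of canonical forms (defined on all terms, meaningful on canonical ones).\<close>
fun csize :: "trm \<Rightarrow> nat" where
  "csize (Var x) = 0"
| "csize (Pair t u) = 1"
| "csize (App n t) = csize n + 1"
| "csize (Lam p t) = csize t + 1"
| "csize (Sub t p n) = csize t + csize n + 1"

datatype tight = TN | TM
datatype ty = Tt tight | Prod "ty multiset" "ty multiset" | Arr "ty multiset" ty

type_synonym ctx = "nat \<Rightarrow> ty multiset"

definition is_tight :: "ty \<Rightarrow> bool" where
  "is_tight \<sigma> \<longleftrightarrow> (\<exists>tt. \<sigma> = Tt tt)"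

definition tight_ctx :: "ctx \<Rightarrow> bool" where
  "tight_ctx \<Gamma> \<longleftrightarrow> (\<forall>x. \<forall>\<sigma>\<in>#\<Gamma> x. is_tight \<sigma>)"

definition empty_ctx :: ctx where
  "empty_ctx = (\<lambda>_. {#})"

definition ctx_union :: "ctx \<Rightarrow> ctx \<Rightarrow> ctx" where
  "ctx_union \<Gamma> \<Delta> = (\<lambda>x. \<Gamma> x + \<Delta> x)"

definition ctx_restr :: "nat \<Rightarrow> ctx \<Rightarrow> ctx" where
  "ctx_restr n \<Gamma> = (\<lambda>x. if x < n then \<Gamma> x else {#})"

definition ctx_drop :: "nat \<Rightarrow> ctx \<Rightarrow> ctx" where
  "ctx_drop n \<Gamma> = (\<lambda>x. \<Gamma> (x + n))"

inductive ptyp :: "ctx \<Rightarrow> pat \<Rightarrow> ty multiset \<Rightarrow> nat \<Rightarrow> nat \<Rightarrow> nat \<Rightarrow> bool" where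
  pat_v: "ptyp (\<lambda>x. if x = 0 then A else {#}) PV A 1 0 0"
| pat_prod: "ptyp \<Gamma> p A ep mp fp \<Longrightarrow> ptyp \<Delta> q B eq mq fq \<Longrightarrow>
    ptyp (\<lambda>x. if x < nv p then \<Gamma> x else \<Delta> (x - nv p)) (PP p q) {#Prod A B#}
      (ep + eq) (1 + mp + mq) (fp + fq)"
| pat_p: "(\<forall>x. x \<ge> nv (PP p q) \<longrightarrow> \<Gamma> x = {#}) \<Longrightarrow> tight_ctx \<Gamma> \<Longrightarrow>
    ptyp \<Gamma> (PP p q) {#Tt TN#} 0 0 1"

inductive etyp :: "ctx \<Rightarrow> trm \<Rightarrow> ty \<Rightarrow> nat \<Rightarrow> nat \<Rightarrow> nat \<Rightarrow> nat \<Rightarrow> bool"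
  and metyp :: "ctx \<Rightarrow> trm \<Rightarrow> ty multiset \<Rightarrow> nat \<Rightarrow> nat \<Rightarrow> nat \<Rightarrow> nat \<Rightarrow> bool" where
  t_ax: "etyp (\<lambda>y. if y = x then {#\<sigma>#} else {#}) (Var x) \<sigma> 0 0 0 0"
| t_abs: "etyp \<Gamma> t \<sigma> b e m f \<Longrightarrow> ptyp (ctx_restr (nv p) \<Gamma>) p A ep mp fp \<Longrightarrow>
    etyp (ctx_drop (nv p) \<Gamma>) (Lam p t) (Arr A \<sigma>) (b + 1) (e + ep) (m + mp) (f + fp)"
| t_abs_p: "etyp \<Gamma> t (Tt tt) b e m f \<Longrightarrow> tight_ctx (ctx_restr (nv p) \<Gamma>) \<Longrightarrow>
    etyp (ctx_drop (nv p) \<Gamma>) (Lam p t) (Tt TM) b e m (f + 1)"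
| t_app: "etyp \<Gamma> t (Arr A \<sigma>) bt et mt ft \<Longrightarrow> metyp \<Delta> u A bu eu mu fu \<Longrightarrow>
    etyp (ctx_union \<Gamma> \<Delta>) (App t u) \<sigma> (bt + bu) (et + eu) (mt + mu) (ft + fu)"
| t_app_p: "etyp \<Gamma> t (Tt TN) b e m f \<Longrightarrow> etyp \<Gamma> (App t u) (Tt TN) b e m (f + 1)"
| t_pair: "metyp \<Gamma> t A bt et mt ft \<Longrightarrow> metyp \<Delta> u B bu eu mu fu \<Longrightarrow>
    etyp (ctx_union \<Gamma> \<Delta>) (Pair t u) (Prod A B) (bt + bu) (et + eu) (mt + mu) (ft + fu)"
| t_pair_p: "etyp empty_ctx (Pair t u) (Tt TM) 0 0 0 1"
| t_match: "etyp \<Gamma> t \<sigma> bt et mt ft \<Longrightarrow> ptyp (ctx_restr (nv p) \<Gamma>) p A ep mp fp \<Longrightarrow>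
    metyp \<Delta> u A bu eu mu fu \<Longrightarrow>
    etyp (ctx_union (ctx_drop (nv p) \<Gamma>) \<Delta>) (Sub t p u) \<sigma>
      (bt + bu) (et + eu + ep) (mt + mu + mp) (ft + fu + fp)"
| m_empty: "metyp empty_ctx t {#} 0 0 0 0"
| m_add: "metyp \<Gamma> t A b e m f \<Longrightarrow> etyp \<Delta> t \<sigma> b' e' m' f' \<Longrightarrow>
    metyp (ctx_union \<Gamma> \<Delta>) t (add_mset \<sigma> A) (b + b') (e + e') (m + m') (f + f')"

end

theory Submission
  imports Defs
begin


lemma ctx_union_empty[simp]: "ctx_union empty_ctx G = G" "ctx_union G empty_ctx = G"
  by (auto simp: ctx_union_def empty_ctx_def)

lemma tight_union[intro]: "tight_ctx G \<Longrightarrow> tight_ctx D \<Longrightarrow> tight_ctx (ctx_union G D)"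
  by (auto simp: tight_ctx_def ctx_union_def)
lemma tight_drop[intro]: "tight_ctx G \<Longrightarrow> tight_ctx (ctx_drop n G)"
  by (auto simp: tight_ctx_def ctx_drop_def)
lemma tight_restr[intro]: "tight_ctx G \<Longrightarrow> tight_ctx (ctx_restr n G)"
  by (auto simp: tight_ctx_def ctx_restr_def)
lemma tight_empty[intro]: "tight_ctx empty_ctx"
  by (auto simp: tight_ctx_def empty_ctx_def)

lemma metyp_single_I: "etyp G t s b e m f \<Longrightarrow> metyp G t {#s#} b e m f"
  using m_add[OF m_empty] by fastforce

lemma canonical:
  "(canM t \<longrightarrow> (\<exists>G tt. tight_ctx G \<and> etyp G t (Tt tt) 0 0 0 (csize t))) \<and>
   (canN t \<longrightarrow> (\<exists>G. tight_ctx G \<and> etyp G t (Tt TN) 0 0 0 (csize t)))"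
proof -
  have "(canM t \<longrightarrow> (\<exists>G tt. tight_ctx G \<and> etyp G t (Tt tt) 0 0 0 (csize t)))
      \<and> (canN t' \<longrightarrow> (\<exists>G. tight_ctx G \<and> etyp G t' (Tt TN) 0 0 0 (csize t')))" for t t'
  proof -
    have "(canM t \<Longrightarrow> (\<exists>G tt. tight_ctx G \<and> etyp G t (Tt tt) 0 0 0 (csize t)))"
      and "(canN t' \<Longrightarrow> (\<exists>G. tight_ctx G \<and> etyp G t' (Tt TN) 0 0 0 (csize t')))"
    proof (induction t and t' rule: canM_canN.inducts)
      case (cM_lam t p)
      then obtain G tt where "tight_ctx G" "etyp G t (Tt tt) 0 0 0 (csize t)" by blast
      with t_abs_p[OF this(2), of p] show ?case by auto
    next
      case (cM_pair t u)
      show ?case using t_pair_p[of t u] by auto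
    next
      case (cM_sub t n p1 p2)
      then obtain G tt D where G: "tight_ctx G" "etyp G t (Tt tt) 0 0 0 (csize t)"
        and D: "tight_ctx D" "etyp D n (Tt TN) 0 0 0 (csize n)" by blast
      have P: "ptyp (ctx_restr (nv (PP p1 p2)) G) (PP p1 p2) {#Tt TN#} 0 0 1"
        using tight_restr[OF G(1)] by (intro pat_p) (auto simp: ctx_restr_def)
      from t_match[OF G(2) P metyp_single_I[OF D(2)]]
      have "etyp (ctx_union (ctx_drop (nv (PP p1 p2)) G) D) (Sub t (PP p1 p2) n) (Tt tt) 0 0 0 (csize (Sub t (PP p1 p2) n))" by simp
      moreover have "tight_ctx (ctx_union (ctx_drop (nv (PP p1 p2)) G) D)" using G D by blast
      ultimately show ?case by blast
    next
      case (cM_N n) then show ?case by blast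
    next
      case (cN_var x)
      have "tight_ctx (\<lambda>y. if y = x then {#Tt TN#} else {#})" by (auto simp: tight_ctx_def is_tight_def)
      then show ?case using t_ax[of x "Tt TN"] unfolding csize.simps by blast
    next
      case (cN_app n t)
      then show ?case using t_app_p by fastforce
    next
      case (cN_sub n n' p1 p2)
      then obtain G D where G: "tight_ctx G" "etyp G n (Tt TN) 0 0 0 (csize n)"
        and D: "tight_ctx D" "etyp D n' (Tt TN) 0 0 0 (csize n')" by blast
      have P: "ptyp (ctx_restr (nv (PP p1 p2)) G) (PP p1 p2) {#Tt TN#} 0 0 1"
        using tight_restr[OF G(1)] by (intro pat_p) (auto simp: ctx_restr_def)
      from t_match[OF G(2) P metyp_single_I[OF D(2)]]
      have "etyp (ctx_union (ctx_drop (nv (PP p1 p2)) G) D) (Sub n (PP p1 p2) n') (Tt TN) 0 0 0 (csize (Sub n (PP p1 p2) n'))" by simp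
      moreover have "tight_ctx (ctx_union (ctx_drop (nv (PP p1 p2)) G) D)" using G D by blast
      ultimately show ?case by blast
    qed
    then show ?thesis by blast
  qed
  then show ?thesis by blast
qed



lemma metyp_induct[consumes 1, case_names empty add]:
  assumes "metyp G t A b e m f"
    and "\<And>t. Q empty_ctx t {#} 0 0 0 0"
    and "\<And>G t A b e m f D s b' e' m' f'. metyp G t A b e m f \<Longrightarrow> Q G t A b e m f \<Longrightarrow>
           etyp D t s b' e' m' f' \<Longrightarrow> Q (ctx_union G D) t (add_mset s A) (b+b') (e+e') (m+m') (f+f')"
  shows "Q G t A b e m f"
  using assms(1)
  by (induction rule: etyp_metyp.inducts(2)[where ?P1.0="\<lambda>_ _ _ _ _ _ _. True"]) (auto intro: assms(2,3))

lemma metyp_empty: "metyp G t {#} b e m f \<Longrightarrow> G = empty_ctx \<and> b = 0 \<and> e = 0 \<and> m = 0 \<and> f = 0"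
  by (erule metyp.cases) auto

lemma metyp_single: "metyp G t {#s#} b e m f \<Longrightarrow> etyp G t s b e m f"
  by (erule metyp.cases) (auto dest!: metyp_empty)

lemma ctx_union_assoc: "ctx_union (ctx_union a b) c = ctx_union a (ctx_union b c)"
  by (auto simp: ctx_union_def add.assoc)
lemma ctx_union_commute: "ctx_union a b = ctx_union b a"
  by (auto simp: ctx_union_def add.commute)
lemma ctx_union_left_commute: "ctx_union a (ctx_union b c) = ctx_union b (ctx_union a c)"
  by (auto simp: ctx_union_def add.left_commute)
lemmas ctx_union_ac = ctx_union_assoc ctx_union_commute ctx_union_left_commute

lemma metyp_union: "metyp G2 t A2 b2 e2 m2 f2 \<Longrightarrow> metyp G1 t A1 b1 e1 m1 f1 \<Longrightarrow>
   metyp (ctx_union G1 G2) t (A1 + A2) (b1+b2) (e1+e2) (m1+m2) (f1+f2)"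
proof (induction rule: metyp_induct)
  case (empty t) then show ?case by simp
next
  case (add G t A b e m f D s b' e' m' f')
  from m_add[OF add.IH[OF add.prems] add.hyps(2)] show ?case
    by (simp add: ctx_union_assoc add.assoc)
qed

definition shiftc :: "nat \<Rightarrow> nat \<Rightarrow> ctx \<Rightarrow> ctx" where
  "shiftc k c G = (\<lambda>x. if x < c then G x else if x < c + k then {#} else G (x - k))"

lemma shiftc_union: "ctx_union (shiftc k c G) (shiftc k c D) = shiftc k c (ctx_union G D)"
  by (auto simp: shiftc_def ctx_union_def)
lemma shiftc_empty[simp]: "shiftc k c empty_ctx = empty_ctx"
  by (auto simp: shiftc_def empty_ctx_def)
lemma shiftc_drop: "ctx_drop n (shiftc k (c + n) G) = shiftc k c (ctx_drop n G)"
  by (rule ext) (auto simp: shiftc_def ctx_drop_def)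
lemma shiftc_restr: "ctx_restr n (shiftc k (c + n) G) = ctx_restr n G"
  by (rule ext) (auto simp: shiftc_def ctx_restr_def)

inductive_cases etyp_VarE: "etyp G (Var x) s b e m f"
inductive_cases etyp_LamE: "etyp G (Lam p t) s b e m f"
inductive_cases etyp_AppE: "etyp G (App t u) s b e m f"
inductive_cases etyp_PairE: "etyp G (Pair t u) s b e m f"
inductive_cases etyp_SubE: "etyp G (Sub t p u) s b e m f"

lemma metyp_lift:
  assumes "metyp G t' A b e m f" "t' = shift k c t"
    and "\<And>G s b e m f. etyp G (shift k c t) s b e m f \<Longrightarrow> \<exists>G'. G = shiftc k c G' \<and> etyp G' t s b e m f"
  shows "\<exists>G'. G = shiftc k c G' \<and> metyp G' t A b e m f"
  using assms
proof (induction rule: metyp_induct)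
  case (empty t')
  show ?case using m_empty[of t] by (intro exI[of _ empty_ctx]) simp
next
  case (add G t' A b e m f D s b' e' m' f')
  obtain G1 where "G = shiftc k c G1" "metyp G1 t A b e m f"
    using add.IH[OF add.prems] by blast
  moreover obtain D1 where "D = shiftc k c D1" "etyp D1 t s b' e' m' f'"
    using add.prems(2)[OF add.hyps(2)[unfolded add.prems(1)]] by blast
  ultimately show ?case using m_add[of G1 t A b e m f D1 s b' e' m' f'] by (intro exI[of _ "ctx_union G1 D1"]) (simp add: shiftc_union)
qed



lemma unshift:
  "etyp G (shift k c t) s b e m f \<Longrightarrow> \<exists>G'. G = shiftc k c G' \<and> etyp G' t s b e m f"
proof (induction t arbitrary: k c G s b e m f)
  case (Var i)
  from Var.prems have 1: "G = (\<lambda>y. if y = (if i < c then i else i + k) then {#s#} else {#})"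
    "b = 0" "e = 0" "m = 0" "f = 0" by (auto elim: etyp_VarE)
  have "G = shiftc k c (\<lambda>y. if y = i then {#s#} else {#})"
    unfolding 1(1) by (rule ext) (auto simp: shiftc_def)
  then show ?case using t_ax[of i s] 1 by blast
next
  case (Lam p t)
  from Lam.prems[simplified] show ?case
  proof (cases rule: etyp_LamE[consumes 1])
    case (1 G1 s' b1 e1 m1 f1 A ep mp fp)
    from Lam.IH[OF 1(7)] obtain G' where G': "G1 = shiftc k (c + nv p) G'" "etyp G' t s' b1 e1 m1 f1"
      by blast
    have "ptyp (ctx_restr (nv p) G') p A ep mp fp" using 1(8) G'(1) by (simp add: shiftc_restr)
    from t_abs[OF G'(2) this] have "etyp (ctx_drop (nv p) G') (Lam p t) s b e m f"
      using 1(2-6) by simp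
    moreover have "G = shiftc k c (ctx_drop (nv p) G')" using 1(1) G'(1) by (simp add: shiftc_drop)
    ultimately show ?thesis by blast
  next
    case (2 G1 tt f1)
    from Lam.IH[OF 2(4)[simplified]] obtain G' where G': "G1 = shiftc k (c + nv p) G'" "etyp G' t (Tt tt) b e m f1"
      by blast
    have "tight_ctx (ctx_restr (nv p) G')" using 2(5) G'(1) by (simp add: shiftc_restr)
    from t_abs_p[OF G'(2) this] have "etyp (ctx_drop (nv p) G') (Lam p t) s b e m f"
      using 2(2-3) by simp
    moreover have "G = shiftc k c (ctx_drop (nv p) G')" using 2(1) G'(1) by (simp add: shiftc_drop)
    ultimately show ?thesis by blast
  qed
next
  case (Pair t u)
  from Pair.prems[simplified] show ?case
  proof (cases rule: etyp_PairE[consumes 1])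
    case (1 G1 A bt et mt ft D B bu eu mu fu)
    obtain G' where G': "G1 = shiftc k c G'" "metyp G' t A bt et mt ft"
      using metyp_lift[OF 1(7) refl Pair.IH(1)] by blast
    obtain D' where D': "D = shiftc k c D'" "metyp D' u B bu eu mu fu"
      using metyp_lift[OF 1(8) refl Pair.IH(2)] by blast
    show ?thesis using t_pair[OF G'(2) D'(2)] 1 G'(1) D'(1) by (intro exI[of _ "ctx_union G' D'"]) (simp add: shiftc_union)
  next
    case 2
    have "etyp empty_ctx (trm.Pair t u) (Tt TM) 0 0 0 (Suc 0)" using t_pair_p[of t u] by simp
    then show ?thesis using 2 by (intro exI[of _ empty_ctx]) simp
  qed
next
  case (App t u)
  from App.prems[simplified] show ?case
  proof (cases rule: etyp_AppE[consumes 1])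
    case (1 G1 A bt et mt ft D bu eu mu fu)
    obtain G' where G': "G1 = shiftc k c G'" "etyp G' t (Arr A s) bt et mt ft"
      using App.IH(1)[OF 1(6)] by blast
    obtain D' where D': "D = shiftc k c D'" "metyp D' u A bu eu mu fu"
      using metyp_lift[OF 1(7) refl App.IH(2)] by blast
    show ?thesis using t_app[OF G'(2) D'(2)] 1 G'(1) D'(1) by (intro exI[of _ "ctx_union G' D'"]) (simp add: shiftc_union)
  next
    case (2 f1)
    obtain G' where G': "G = shiftc k c G'" "etyp G' t (Tt TN) b e m f1"
      using App.IH(1)[OF 2(3)] by blast
    show ?thesis using t_app_p[OF G'(2), of u] G'(1) 2(1,2) by (intro exI[of _ G']) simp
  qed
next
  case (Sub t p u)
  from Sub.prems[simplified] show ?case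
  proof (cases rule: etyp_SubE[consumes 1])
    case (1 G1 bt et mt ft A ep mp fp D bu eu mu fu)
    obtain G' where G': "G1 = shiftc k (c + nv p) G'" "etyp G' t s bt et mt ft"
      using Sub.IH(1)[OF 1(6)] by blast
    obtain D' where D': "D = shiftc k c D'" "metyp D' u A bu eu mu fu"
      using metyp_lift[OF 1(8) refl Sub.IH(2)] by blast
    have P: "ptyp (ctx_restr (nv p) G') p A ep mp fp" using 1(7) G'(1) by (simp add: shiftc_restr)
    show ?thesis using t_match[OF G'(2) P D'(2)] 1 G'(1) D'(1) by (intro exI[of _ "ctx_union (ctx_drop (nv p) G') D'"]) (simp add: shiftc_union shiftc_drop)
  qed
qed

lemma metyp_unshift: "metyp G (shift k c t) A b e m f \<Longrightarrow> \<exists>G'. G = shiftc k c G' \<and> metyp G' t A b e m f"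
  using metyp_lift[OF _ refl unshift] by blast



definition delc :: "nat \<Rightarrow> ctx \<Rightarrow> ctx" where
  "delc c G = (\<lambda>x. if x < c then G x else G (Suc x))"

definition decomp :: "nat \<Rightarrow> trm \<Rightarrow> ctx \<Rightarrow> trm \<Rightarrow> ty \<Rightarrow> nat \<Rightarrow> nat \<Rightarrow> nat \<Rightarrow> nat \<Rightarrow> bool" where
  "decomp c s G t \<sigma> b e m f \<longleftrightarrow> (\<exists>Gt D b1 e1 m1 f1 b2 e2 m2 f2. etyp Gt t \<sigma> b1 e1 m1 f1 \<and>
     metyp D s (Gt c) b2 e2 m2 f2 \<and> G = ctx_union (delc c Gt) (shiftc c 0 D) \<and>
     b = b1 + b2 \<and> e = e1 + e2 \<and> m = m1 + m2 \<and> f = f1 + f2)"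

definition mdecomp :: "nat \<Rightarrow> trm \<Rightarrow> ctx \<Rightarrow> trm \<Rightarrow> ty multiset \<Rightarrow> nat \<Rightarrow> nat \<Rightarrow> nat \<Rightarrow> nat \<Rightarrow> bool" where
  "mdecomp c s G t A b e m f \<longleftrightarrow> (\<exists>Gt D b1 e1 m1 f1 b2 e2 m2 f2. metyp Gt t A b1 e1 m1 f1 \<and>
     metyp D s (Gt c) b2 e2 m2 f2 \<and> G = ctx_union (delc c Gt) (shiftc c 0 D) \<and>
     b = b1 + b2 \<and> e = e1 + e2 \<and> m = m1 + m2 \<and> f = f1 + f2)"

lemma decompI: "etyp Gt t \<sigma> b1 e1 m1 f1 \<Longrightarrow> metyp D s (Gt c) b2 e2 m2 f2 \<Longrightarrow>
  G = ctx_union (delc c Gt) (shiftc c 0 D) \<Longrightarrow> b = b1 + b2 \<Longrightarrow> e = e1 + e2 \<Longrightarrow> m = m1 + m2 \<Longrightarrow> f = f1 + f2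
  \<Longrightarrow> decomp c s G t \<sigma> b e m f"
  unfolding decomp_def by blast

lemma mdecompI: "metyp Gt t A b1 e1 m1 f1 \<Longrightarrow> metyp D s (Gt c) b2 e2 m2 f2 \<Longrightarrow>
  G = ctx_union (delc c Gt) (shiftc c 0 D) \<Longrightarrow> b = b1 + b2 \<Longrightarrow> e = e1 + e2 \<Longrightarrow> m = m1 + m2 \<Longrightarrow> f = f1 + f2
  \<Longrightarrow> mdecomp c s G t A b e m f"
  unfolding mdecomp_def by blast

lemma decomp_union:
  "ctx_union (ctx_union (delc c G1) (shiftc c 0 D1)) (ctx_union (delc c G2) (shiftc c 0 D2))
   = ctx_union (delc c (ctx_union G1 G2)) (shiftc c 0 (ctx_union D1 D2))"
  by (rule ext) (simp add: ctx_union_def delc_def shiftc_def add_ac)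

lemma decomp_drop:
  "ctx_drop n (ctx_union (delc (c + n) G) (shiftc (c + n) 0 D)) = ctx_union (delc c (ctx_drop n G)) (shiftc c 0 D)"
  by (rule ext) (simp add: ctx_union_def delc_def shiftc_def ctx_drop_def)

lemma decomp_restr:
  "ctx_restr n (ctx_union (delc (c + n) G) (shiftc (c + n) 0 D)) = ctx_restr n G"
  by (rule ext) (simp add: ctx_union_def delc_def shiftc_def ctx_restr_def)

lemma decomp_empty: "empty_ctx = ctx_union (delc c empty_ctx) (shiftc c 0 empty_ctx)"
  by (rule ext) (simp add: ctx_union_def delc_def empty_ctx_def shiftc_def)

lemma delc_empty[simp]: "delc c empty_ctx = empty_ctx"
  by (rule ext) (simp add: delc_def empty_ctx_def)

lemma m_empty_c: "metyp empty_ctx s (empty_ctx c) 0 0 0 0"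
  using m_empty[of s] by (simp add: empty_ctx_def)

lemma mdecomp_lift:
  assumes "metyp G t' A b e m f" "t' = subst c s t"
    and "\<And>G \<sigma> b e m f. etyp G (subst c s t) \<sigma> b e m f \<Longrightarrow> decomp c s G t \<sigma> b e m f"
  shows "mdecomp c s G t A b e m f"
  using assms
proof (induction rule: metyp_induct)
  case (empty t')
  show ?case by (rule mdecompI[OF m_empty m_empty_c]) (simp_all add: decomp_empty)
next
  case (add G t' A b e m f D \<sigma> b' e' m' f')
  have "mdecomp c s G t A b e m f" using add.IH[OF add.prems] .
  then obtain Gt1 D1 b1 e1 m1 f1 b2 e2 m2 f2 where h1: "metyp Gt1 t A b1 e1 m1 f1"
     "metyp D1 s (Gt1 c) b2 e2 m2 f2" "G = ctx_union (delc c Gt1) (shiftc c 0 D1)"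
     "b = b1 + b2" "e = e1 + e2" "m = m1 + m2" "f = f1 + f2" unfolding mdecomp_def by blast
  have "decomp c s D t \<sigma> b' e' m' f'" using add.prems(2)[OF add.hyps(2)[unfolded add.prems(1)]] .
  then obtain Gt3 D3 b3 e3 m3 f3 b4 e4 m4 f4 where h2: "etyp Gt3 t \<sigma> b3 e3 m3 f3"
     "metyp D3 s (Gt3 c) b4 e4 m4 f4" "D = ctx_union (delc c Gt3) (shiftc c 0 D3)"
     "b' = b3 + b4" "e' = e3 + e4" "m' = m3 + m4" "f' = f3 + f4" unfolding decomp_def by blast
  have M: "metyp (ctx_union D1 D3) s (ctx_union Gt1 Gt3 c) (b2+b4) (e2+e4) (m2+m4) (f2+f4)"
    using metyp_union[OF h2(2) h1(2)] by (simp add: ctx_union_def)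
  show ?case
    by (rule mdecompI[OF m_add[OF h1(1) h2(1)] M]) (simp_all add: h1 h2 decomp_union)
qed

lemma anti_subst:
  "etyp G (subst c s t) \<sigma> b e m f \<Longrightarrow> decomp c s G t \<sigma> b e m f"
proof (induction t arbitrary: c G \<sigma> b e m f)
  case (Var i)
  consider "i < c" | "i = c" | "i > c" by linarith
  then show ?case
  proof cases
    case 1
    with Var.prems have h: "G = (\<lambda>y. if y = i then {#\<sigma>#} else {#})"
      "b = 0" "e = 0" "m = 0" "f = 0" by (auto elim: etyp_VarE)
    have M: "metyp empty_ctx s ((\<lambda>y. if y = i then {#\<sigma>#} else {#}) c) 0 0 0 0"
      using m_empty[of s] 1 by simp
    show ?thesis
      by (rule decompI[OF t_ax M])
        (use 1 h in \<open>auto simp: delc_def shiftc_def ctx_union_def empty_ctx_def\<close>)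
  next
    case 2
    with Var.prems have "etyp G (shift c 0 s) \<sigma> b e m f" by simp
    from unshift[OF this] obtain G' where G': "G = shiftc c 0 G'" "etyp G' s \<sigma> b e m f" by blast
    have M: "metyp G' s ((\<lambda>y. if y = i then {#\<sigma>#} else {#}) c) b e m f"
      using metyp_single_I[OF G'(2)] 2 by simp
    show ?thesis
      by (rule decompI[OF t_ax M]) (use 2 G' in \<open>auto simp: delc_def shiftc_def ctx_union_def intro!: ext\<close>)
  next
    case 3
    with Var.prems have h: "G = (\<lambda>y. if y = i - 1 then {#\<sigma>#} else {#})"
      "b = 0" "e = 0" "m = 0" "f = 0" by (auto elim: etyp_VarE)
    have M: "metyp empty_ctx s ((\<lambda>y. if y = i then {#\<sigma>#} else {#}) c) 0 0 0 0"
      using m_empty[of s] 3 by simp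
    show ?thesis
      by (rule decompI[OF t_ax M])
        (use 3 h in \<open>auto simp: delc_def shiftc_def ctx_union_def empty_ctx_def intro!: ext\<close>)
  qed
next
  case (Lam p t)
  from Lam.prems[simplified] show ?case
  proof (cases rule: etyp_LamE[consumes 1])
    case (1 G1 s' b1 e1 m1 f1 A ep mp fp)
    from Lam.IH[OF 1(7)] obtain Gt D b1' e1' m1' f1' b2 e2 m2 f2 where h:
      "etyp Gt t s' b1' e1' m1' f1'" "metyp D s (Gt (c + nv p)) b2 e2 m2 f2"
      "G1 = ctx_union (delc (c + nv p) Gt) (shiftc (c + nv p) 0 D)"
      "b1 = b1' + b2" "e1 = e1' + e2" "m1 = m1' + m2" "f1 = f1' + f2"
      unfolding decomp_def by blast
    have P: "ptyp (ctx_restr (nv p) Gt) p A ep mp fp" using 1(8) h(3) by (simp add: decomp_restr)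
    have M: "metyp D s (ctx_drop (nv p) Gt c) b2 e2 m2 f2" using h(2) by (simp add: ctx_drop_def add.commute)
    show ?thesis
      unfolding 1(1-6) by (rule decompI[OF t_abs[OF h(1) P] M]) (simp_all add: 1 h decomp_drop)
  next
    case (2 G1 tt f1)
    from Lam.IH[OF 2(4)] obtain Gt D b1' e1' m1' f1' b2 e2 m2 f2 where h:
      "etyp Gt t (Tt tt) b1' e1' m1' f1'" "metyp D s (Gt (c + nv p)) b2 e2 m2 f2"
      "G1 = ctx_union (delc (c + nv p) Gt) (shiftc (c + nv p) 0 D)"
      "b = b1' + b2" "e = e1' + e2" "m = m1' + m2" "f1 = f1' + f2"
      unfolding decomp_def by blast
    have P: "tight_ctx (ctx_restr (nv p) Gt)" using 2(5) h(3) by (simp add: decomp_restr)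
    have M: "metyp D s (ctx_drop (nv p) Gt c) b2 e2 m2 f2" using h(2) by (simp add: ctx_drop_def add.commute)
    show ?thesis
      unfolding 2(1-3) by (rule decompI[OF t_abs_p[OF h(1) P] M]) (simp_all add: 2 h decomp_drop)
  qed
next
  case (Pair t u)
  from Pair.prems[simplified] show ?case
  proof (cases rule: etyp_PairE[consumes 1])
    case (1 G1 A bt et mt ft D B bu eu mu fu)
    have "mdecomp c s G1 t A bt et mt ft" by (rule mdecomp_lift[OF 1(7) refl Pair.IH(1)])
    then obtain Gt1 D1 b1 e1 m1 f1 b2 e2 m2 f2 where h1: "metyp Gt1 t A b1 e1 m1 f1"
     "metyp D1 s (Gt1 c) b2 e2 m2 f2" "G1 = ctx_union (delc c Gt1) (shiftc c 0 D1)"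
     "bt = b1 + b2" "et = e1 + e2" "mt = m1 + m2" "ft = f1 + f2" unfolding mdecomp_def by blast
    have "mdecomp c s D u B bu eu mu fu" by (rule mdecomp_lift[OF 1(8) refl Pair.IH(2)])
    then obtain Gt3 D3 b3 e3 m3 f3 b4 e4 m4 f4 where h2: "metyp Gt3 u B b3 e3 m3 f3"
     "metyp D3 s (Gt3 c) b4 e4 m4 f4" "D = ctx_union (delc c Gt3) (shiftc c 0 D3)"
     "bu = b3 + b4" "eu = e3 + e4" "mu = m3 + m4" "fu = f3 + f4" unfolding mdecomp_def by blast
    have M: "metyp (ctx_union D1 D3) s (ctx_union Gt1 Gt3 c) (b2+b4) (e2+e4) (m2+m4) (f2+f4)"
      using metyp_union[OF h2(2) h1(2)] by (simp add: ctx_union_def)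
    show ?thesis
      unfolding 1(1-6) by (rule decompI[OF t_pair[OF h1(1) h2(1)] M]) (simp_all add: 1 h1 h2 decomp_union)
  next
    case 2
    have T: "etyp empty_ctx (trm.Pair t u) (Tt TM) 0 0 0 (Suc 0)" using t_pair_p[of t u] by simp
    show ?thesis
      unfolding 2(1-6) by (rule decompI[OF T m_empty_c]) (simp_all add: 2)
  qed
next
  case (App t u)
  from App.prems[simplified] show ?case
  proof (cases rule: etyp_AppE[consumes 1])
    case (1 G1 A bt et mt ft D bu eu mu fu)
    from App.IH(1)[OF 1(6)] obtain Gt1 D1 b1 e1 m1 f1 b2 e2 m2 f2 where h1: "etyp Gt1 t (Arr A \<sigma>) b1 e1 m1 f1"
     "metyp D1 s (Gt1 c) b2 e2 m2 f2" "G1 = ctx_union (delc c Gt1) (shiftc c 0 D1)"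
     "bt = b1 + b2" "et = e1 + e2" "mt = m1 + m2" "ft = f1 + f2" unfolding decomp_def by blast
    have "mdecomp c s D u A bu eu mu fu" by (rule mdecomp_lift[OF 1(7) refl App.IH(2)])
    then obtain Gt3 D3 b3 e3 m3 f3 b4 e4 m4 f4 where h2: "metyp Gt3 u A b3 e3 m3 f3"
     "metyp D3 s (Gt3 c) b4 e4 m4 f4" "D = ctx_union (delc c Gt3) (shiftc c 0 D3)"
     "bu = b3 + b4" "eu = e3 + e4" "mu = m3 + m4" "fu = f3 + f4" unfolding mdecomp_def by blast
    have M: "metyp (ctx_union D1 D3) s (ctx_union Gt1 Gt3 c) (b2+b4) (e2+e4) (m2+m4) (f2+f4)"
      using metyp_union[OF h2(2) h1(2)] by (simp add: ctx_union_def)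
    show ?thesis
      unfolding 1(1-5) by (rule decompI[OF t_app[OF h1(1) h2(1)] M]) (simp_all add: 1 h1 h2 decomp_union)
  next
    case (2 f1)
    from App.IH(1)[OF 2(3)] obtain Gt1 D1 b1 e1 m1 f1' b2 e2 m2 f2 where h1: "etyp Gt1 t (Tt TN) b1 e1 m1 f1'"
     "metyp D1 s (Gt1 c) b2 e2 m2 f2" "G = ctx_union (delc c Gt1) (shiftc c 0 D1)"
     "b = b1 + b2" "e = e1 + e2" "m = m1 + m2" "f1 = f1' + f2" unfolding decomp_def by blast
    show ?thesis
      unfolding 2(1-2) by (rule decompI[OF t_app_p[OF h1(1)] h1(2)]) (simp_all add: 2 h1)
  qed
next
  case (Sub t p u)
  from Sub.prems[simplified] show ?case
  proof (cases rule: etyp_SubE[consumes 1])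
    case (1 G1 bt et mt ft A ep mp fp D bu eu mu fu)
    from Sub.IH(1)[OF 1(6)] obtain Gt1 D1 b1 e1 m1 f1 b2 e2 m2 f2 where h1: "etyp Gt1 t \<sigma> b1 e1 m1 f1"
     "metyp D1 s (Gt1 (c + nv p)) b2 e2 m2 f2" "G1 = ctx_union (delc (c + nv p) Gt1) (shiftc (c + nv p) 0 D1)"
     "bt = b1 + b2" "et = e1 + e2" "mt = m1 + m2" "ft = f1 + f2" unfolding decomp_def by blast
    have "mdecomp c s D u A bu eu mu fu" by (rule mdecomp_lift[OF 1(8) refl Sub.IH(2)])
    then obtain Gt3 D3 b3 e3 m3 f3 b4 e4 m4 f4 where h2: "metyp Gt3 u A b3 e3 m3 f3"
     "metyp D3 s (Gt3 c) b4 e4 m4 f4" "D = ctx_union (delc c Gt3) (shiftc c 0 D3)"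
     "bu = b3 + b4" "eu = e3 + e4" "mu = m3 + m4" "fu = f3 + f4" unfolding mdecomp_def by blast
    have P: "ptyp (ctx_restr (nv p) Gt1) p A ep mp fp" using 1(7) h1(3) by (simp add: decomp_restr)
    have M: "metyp (ctx_union D1 D3) s (ctx_union (ctx_drop (nv p) Gt1) Gt3 c) (b2+b4) (e2+e4) (m2+m4) (f2+f4)"
      using metyp_union[OF h2(2) h1(2)] by (simp add: ctx_union_def ctx_drop_def add.commute)
    show ?thesis
      unfolding 1(1-5) by (rule decompI[OF t_match[OF h1(1) P h2(1)] M])
        (simp_all add: 1 h1 h2 decomp_union[symmetric] decomp_drop)
  qed
qed



lemma shift_shift: "shift a c (shift b c t) = shift (a + b) c t"
  by (induction t arbitrary: c) auto

lemma shift_0[simp]: "shift 0 c t = t"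
  by (induction t arbitrary: c) auto

lemma nbv_Nil[simp]: "nbv [] = 0" and nbv_Cons[simp]: "nbv ((q, w) # L) = nv q + nbv L"
  by (auto simp: nbv_def)

lemma drop_shiftc0[simp]: "ctx_drop n (shiftc n 0 D) = D"
  by (rule ext) (simp add: ctx_drop_def shiftc_def)
lemma restr_shiftc0[simp]: "ctx_restr n (shiftc n 0 D) = empty_ctx"
  by (rule ext) (simp add: ctx_restr_def shiftc_def empty_ctx_def)
lemma drop_union: "ctx_drop n (ctx_union G D) = ctx_union (ctx_drop n G) (ctx_drop n D)"
  by (rule ext) (simp add: ctx_drop_def ctx_union_def)
lemma restr_union: "ctx_restr n (ctx_union G D) = ctx_union (ctx_restr n G) (ctx_restr n D)"
  by (rule ext) (simp add: ctx_restr_def ctx_union_def)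

lemma etyp_cong: "etyp G t s b e m f \<Longrightarrow> G = G' \<Longrightarrow> b = b' \<Longrightarrow> e = e' \<Longrightarrow> m = m' \<Longrightarrow> f = f' \<Longrightarrow>
  etyp G' t s b' e' m' f'" by simp

lemma exp_beta:
  "etyp G (plug L (Sub t p (shift (nbv L) 0 u))) \<sigma> b e m f \<Longrightarrow>
   etyp G (App (plug L (Lam p t)) u) \<sigma> (Suc b) e m f"
proof (induction L arbitrary: G \<sigma> b e m f u)
  case Nil
  from Nil.prems[simplified] show ?case
  proof (cases rule: etyp_SubE[consumes 1])
    case (1 G1 bt et mt ft A ep mp fp D bu eu mu fu)
    from t_app[OF t_abs[OF 1(6) 1(7)] 1(8)]
    show ?thesis unfolding 1(1-5) by (simp add: ac_simps)
  qed
next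
  case (Cons a L)
  obtain q w where a: "a = (q, w)" by (cases a)
  have sh: "shift (nbv (a # L)) 0 u = shift (nbv L) 0 (shift (nv q) 0 u)"
    by (simp add: a shift_shift add.commute)
  from Cons.prems[unfolded sh, simplified a plug.simps] show ?case
  proof (cases rule: etyp_SubE[consumes 1])
    case (1 G1 bt et mt ft A ep mp fp D bu eu mu fu)
    from Cons.IH[OF 1(6)] show ?thesis
    proof (cases rule: etyp_AppE[consumes 1])
      case (1 G11 A' b1 e1 m1 f1 D1 b2 e2 m2 f2)
      note h = 1
      obtain D1' where D1': "D1 = shiftc (nv q) 0 D1'" "metyp D1' u A' b2 e2 m2 f2"
        using metyp_unshift[OF h(7)] by blast
      have P: "ptyp (ctx_restr (nv q) G11) q A ep mp fp"
        using \<open>ptyp (ctx_restr (nv q) G1) q A ep mp fp\<close> h(1) D1'(1) by (simp add: restr_union)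
      show ?thesis unfolding a plug.simps
        apply (rule etyp_cong[OF t_app[OF t_match[OF h(6) P \<open>metyp D w A bu eu mu fu\<close>] D1'(2)]])
        using \<open>G = ctx_union (ctx_drop (nv q) G1) D\<close> h(1-5) D1'(1)
        \<open>b = bt + bu\<close> \<open>e = et + eu + ep\<close> \<open>m = mt + mu + mp\<close> \<open>f = ft + fu + fp\<close>
        by (simp_all add: a drop_union ctx_union_ac ac_simps)
    next
      case (2 f')
      note h = 2
      show ?thesis unfolding a plug.simps h(1)
        apply (rule etyp_cong[OF t_app_p[OF t_match[OF h(3) \<open>ptyp (ctx_restr (nv q) G1) q A ep mp fp\<close> \<open>metyp D w A bu eu mu fu\<close>], of u]])
        using \<open>G = ctx_union (ctx_drop (nv q) G1) D\<close> h(1-2)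
        \<open>b = bt + bu\<close> \<open>e = et + eu + ep\<close> \<open>m = mt + mu + mp\<close> \<open>f = ft + fu + fp\<close>
        by (simp_all add: a ac_simps)
    qed
  qed
qed

lemma ptyp_PP_single: "ptyp G (PP p q) A e m f \<Longrightarrow> \<exists>\<tau>. A = {#\<tau>#}"
  by (erule ptyp.cases) auto

lemma shiftc_restr0: "ctx_restr n (shiftc k n G) = ctx_restr n G"
  by (rule ext) (simp add: ctx_restr_def shiftc_def)
lemma restr_drop_shiftc: "ctx_restr k (ctx_drop n (shiftc k n G)) = empty_ctx"
  by (rule ext) (simp add: ctx_restr_def ctx_drop_def shiftc_def empty_ctx_def)
lemma drop_drop_shiftc: "ctx_drop k (ctx_drop n (shiftc k n G)) = ctx_drop n G"
  by (rule ext) (simp add: ctx_drop_def shiftc_def)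
lemma restr_empty_union: "ctx_restr n G = empty_ctx \<Longrightarrow> ctx_restr n (ctx_union G D) = ctx_restr n D"
  by (rule ext) (simp add: ctx_restr_def ctx_union_def empty_ctx_def fun_eq_iff split: if_splits)

lemma exp_match:
  "etyp G (plug L (Sub (Sub (shift (nbv L) (nv p1 + nv p2) t) p1 (shift (nv p2) 0 u1)) p2 u2)) \<sigma> b e m f \<Longrightarrow>
   etyp G (Sub t (PP p1 p2) (plug L (Pair u1 u2))) \<sigma> b e (Suc m) f"
proof (induction L arbitrary: G \<sigma> b e m f t)
  case Nil
  from Nil.prems[simplified] show ?case
  proof (cases rule: etyp_SubE[consumes 1])
    case (1 G2 bt2 et2 mt2 ft2 A2 ep2 mp2 fp2 D2 bu2 eu2 mu2 fu2)
    note o = 1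
    from o(6) show ?thesis
    proof (cases rule: etyp_SubE[consumes 1])
      case (1 G1 bt et mt ft A1 ep1 mp1 fp1 D1 bu1 eu1 mu1 fu1)
      obtain D1' where D1': "D1 = shiftc (nv p2) 0 D1'" "metyp D1' u1 A1 bu1 eu1 mu1 fu1"
        using metyp_unshift[OF 1(8)] by blast
      have eq: "ctx_restr (nv (PP p1 p2)) G1 =
        (\<lambda>x. if x < nv p1 then ctx_restr (nv p1) G1 x else ctx_restr (nv p2) G2 (x - nv p1))"
        by (rule ext) (auto simp: 1(1) D1'(1) ctx_restr_def ctx_union_def ctx_drop_def shiftc_def)
      have P: "ptyp (ctx_restr (nv (PP p1 p2)) G1) (PP p1 p2) {#Prod A1 A2#} (ep1 + ep2) (1 + mp1 + mp2) (fp1 + fp2)"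
        unfolding eq by (rule pat_prod[OF 1(7) o(7)])
      have M: "metyp (ctx_union D1' D2) (Pair u1 u2) {#Prod A1 A2#} (bu1 + bu2) (eu1 + eu2) (mu1 + mu2) (fu1 + fu2)"
        by (rule metyp_single_I[OF t_pair[OF D1'(2) o(8)]])
      have GE: "G = ctx_union (ctx_drop (nv (PP p1 p2)) G1) (ctx_union D1' D2)"
        unfolding o(1) 1(1) D1'(1)
        by (rule ext) (simp add: ctx_union_def ctx_drop_def shiftc_def ac_simps)
      show ?thesis unfolding plug.simps
        apply (rule etyp_cong[OF t_match[OF 1(6) P M]])
        using o(2-5) 1(2-5) GE
        by simp_all
    qed
  qed
next
  case (Cons a L)
  obtain q w where a: "a = (q, w)" by (cases a)
  have sh: "shift (nbv (a # L)) (nv p1 + nv p2) t = shift (nbv L) (nv p1 + nv p2) (shift (nv q) (nv p1 + nv p2) t)"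
    by (simp add: a shift_shift add.commute)
  from Cons.prems[unfolded sh, simplified a plug.simps] show ?case
  proof (cases rule: etyp_SubE[consumes 1])
    case (1 G1 bt et mt ft A ep mp fp D bu eu mu fu)
    note o = 1
    from Cons.IH[OF o(6)] show ?thesis
    proof (cases rule: etyp_SubE[consumes 1])
      case (1 G2 b3 e3 m3 f3 B ep' mp' fp' D2 bu' eu' mu' fu')
      obtain G2' where G2': "G2 = shiftc (nv q) (nv (PP p1 p2)) G2'" "etyp G2' t \<sigma> b3 e3 m3 f3"
        using unshift[OF 1(6)[simplified]] by auto
      obtain \<beta> where B: "B = {#\<beta>#}" using ptyp_PP_single[OF 1(7)] by blast
      have P: "ptyp (ctx_restr (nv (PP p1 p2)) G2') (PP p1 p2) B ep' mp' fp'"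
        using 1(7) G2'(1) by (simp add: shiftc_restr0)
      have T2: "etyp D2 (plug L (Pair u1 u2)) \<beta> bu' eu' mu' fu'" using metyp_single 1(8) B by blast
      have Pq: "ptyp (ctx_restr (nv q) D2) q A ep mp fp"
        using o(7) 1(1) G2'(1) by (simp add: restr_empty_union restr_drop_shiftc)
      have M: "metyp (ctx_union (ctx_drop (nv q) D2) D) (Sub (plug L (Pair u1 u2)) q w) B
         (bu' + bu) (eu' + eu + ep) (mu' + mu + mp) (fu' + fu + fp)"
        unfolding B by (rule metyp_single_I[OF t_match[OF T2 Pq o(8)]])
      show ?thesis unfolding a plug.simps
        apply (rule etyp_cong[OF t_match[OF G2'(2) P M]])
        using o(1-5) 1(1-5) G2'(1)
        by (simp_all add: ac_simps drop_union drop_drop_shiftc ctx_union_ac)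
    qed
  qed
qed



definition kb :: "kind \<Rightarrow> nat" where "kb k = (if k = KB then 1 else 0)"
definition ke :: "kind \<Rightarrow> nat" where "ke k = (if k = KE then 1 else 0)"
definition km :: "kind \<Rightarrow> nat" where "km k = (if k = KM then 1 else 0)"

lemma expand:
  "(k, t') \<in> hred t \<Longrightarrow> etyp G t' \<sigma> b e m f \<Longrightarrow> etyp G t \<sigma> (b + kb k) (e + ke k) (m + km k) f"
proof (induction t arbitrary: k t' G \<sigma> b e m f)
  case (Var x)
  then show ?case by simp
next
  case (Pair t u)
  then show ?case by simp
next
  case (Lam p t)
  from Lam.prems(1) obtain t'' where h: "t' = Lam p t''" "(k, t'') \<in> hred t" by auto
  from Lam.prems(2)[unfolded h(1)] show ?case
  proof (cases rule: etyp_LamE[consumes 1])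
    case (1 G1 s' b1 e1 m1 f1 A ep mp fp)
    show ?thesis unfolding 1(1-6)
      by (rule etyp_cong[OF t_abs[OF Lam.IH[OF h(2) 1(7)] 1(8)]]) simp_all
  next
    case (2 G1 tt f1)
    show ?thesis unfolding 2(1-3)
      by (rule etyp_cong[OF t_abs_p[OF Lam.IH[OF h(2) 2(4)] 2(5)]]) simp_all
  qed
next
  case (App s u)
  from App.prems(1) consider (beta) L p t0 where "k = KB" "s = plug L (Lam p t0)"
      "t' = plug L (Sub t0 p (shift (nbv L) 0 u))"
    | (cl) s' where "t' = App s' u" "(k, s') \<in> hred s"
    by (auto split: if_splits)
  then show ?case
  proof cases
    case beta
    show ?thesis using exp_beta[OF App.prems(2)[unfolded beta(3)]] by (simp add: beta kb_def ke_def km_def)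
  next
    case cl
    from App.prems(2)[unfolded cl(1)] show ?thesis
    proof (cases rule: etyp_AppE[consumes 1])
      case (1 G1 A bt et mt ft D bu eu mu fu)
      show ?thesis unfolding 1(1-5)
        by (rule etyp_cong[OF t_app[OF App.IH(1)[OF cl(2) 1(6)] 1(7)]]) simp_all
    next
      case (2 f1)
      show ?thesis unfolding 2(1-2)
        by (rule etyp_cong[OF t_app_p[OF App.IH(1)[OF cl(2) 2(3)]]]) simp_all
    qed
  qed
next
  case (Sub t p u)
  show ?case
  proof (cases p)
    case PV
    from Sub.prems(1)[unfolded PV] consider (e) "k = KE" "t' = subst 0 u t"
      | (cl) t'' where "t' = Sub t'' PV u" "(k, t'') \<in> hred t"
      by (auto split: if_splits)
    then show ?thesis
    proof cases
      case e
      have "decomp 0 u G t \<sigma> b e m f" using anti_subst[of G 0 u t] Sub.prems(2) e(2) by simp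
      then obtain Gt D b1 e1 m1 f1 b2 e2 m2 f2 where h: "etyp Gt t \<sigma> b1 e1 m1 f1"
        "metyp D u (Gt 0) b2 e2 m2 f2" "G = ctx_union (delc 0 Gt) (shiftc 0 0 D)"
        "b = b1 + b2" "e = e1 + e2" "m = m1 + m2" "f = f1 + f2" unfolding decomp_def by blast
      have eq: "ctx_restr (nv PV) Gt = (\<lambda>x. if x = 0 then Gt 0 else {#})"
        by (rule ext) (simp add: ctx_restr_def)
      have P: "ptyp (ctx_restr (nv PV) Gt) PV (Gt 0) 1 0 0" unfolding eq by (rule pat_v)
      have GE: "G = ctx_union (ctx_drop (nv PV) Gt) D"
        unfolding h(3) by (rule ext) (simp add: ctx_union_def delc_def ctx_drop_def shiftc_def)
      show ?thesis unfolding PV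
        by (rule etyp_cong[OF t_match[OF h(1) P h(2)]]) (simp_all add: GE h e kb_def ke_def km_def)
    next
      case cl
      from Sub.prems(2)[unfolded cl(1)] show ?thesis
      proof (cases rule: etyp_SubE[consumes 1])
        case (1 G1 bt et mt ft A ep mp fp D bu eu mu fu)
        show ?thesis unfolding 1(1-5) PV
          by (rule etyp_cong[OF t_match[OF Sub.IH(1)[OF cl(2) 1(6)] 1(7) 1(8)]]) simp_all
      qed
    qed
  next
    case (PP p1 p2)
    from Sub.prems(1)[unfolded PP] consider
        (mm) L u1 u2 where "k = KM" "u = plug L (Pair u1 u2)"
          "t' = plug L (Sub (Sub (shift (nbv L) (nv p1 + nv p2) t) p1 (shift (nv p2) 0 u1)) p2 u2)"
      | (cl) t'' where "t' = Sub t'' (PP p1 p2) u" "(k, t'') \<in> hred t"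
      | (clu) u' where "t' = Sub t (PP p1 p2) u'" "(k, u') \<in> hred u"
      by (auto split: if_splits)
    then show ?thesis
    proof cases
      case mm
      show ?thesis using exp_match[OF Sub.prems(2)[unfolded mm(3)]]
        by (simp add: PP mm kb_def ke_def km_def)
    next
      case cl
      from Sub.prems(2)[unfolded cl(1)] show ?thesis
      proof (cases rule: etyp_SubE[consumes 1])
        case (1 G1 bt et mt ft A ep mp fp D bu eu mu fu)
        show ?thesis unfolding 1(1-5) PP
          by (rule etyp_cong[OF t_match[OF Sub.IH(1)[OF cl(2) 1(6)] 1(7) 1(8)]]) simp_all
      qed
    next
      case clu
      from Sub.prems(2)[unfolded clu(1)] show ?thesis
      proof (cases rule: etyp_SubE[consumes 1])
        case (1 G1 bt et mt ft A ep mp fp D bu eu mu fu)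
        obtain \<tau> where A: "A = {#\<tau>#}" using ptyp_PP_single 1(7) by blast
        have T: "etyp D u' \<tau> bu eu mu fu" using metyp_single 1(8) A by blast
        have M: "metyp D u A (bu + kb k) (eu + ke k) (mu + km k) fu"
          unfolding A by (rule metyp_single_I[OF Sub.IH(2)[OF clu(2) T]])
        show ?thesis unfolding 1(1-5) PP
          by (rule etyp_cong[OF t_match[OF 1(6) 1(7) M]]) simp_all
      qed
    qed
  qed
qed

theorem theorem3:
  assumes "hsteps t b e m u" and "canM u"
  shows "\<exists>\<Gamma> tt. tight_ctx \<Gamma> \<and> etyp \<Gamma> t (Tt tt) b e m (csize u)"
  using assms
proof (induction rule: hsteps.induct)
  case (hs_refl t)
  then show ?case using canonical by blast
next
  case (hs_B t' t b e m u)
  then obtain G tt where "tight_ctx G" "etyp G t' (Tt tt) b e m (csize u)" by blast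
  with expand[OF hs_B.hyps(1) this(2)] show ?case by (auto simp: kb_def ke_def km_def)
next
  case (hs_E t' t b e m u)
  then obtain G tt where "tight_ctx G" "etyp G t' (Tt tt) b e m (csize u)" by blast
  with expand[OF hs_E.hyps(1) this(2)] show ?case by (auto simp: kb_def ke_def km_def)
next
  case (hs_M t' t b e m u)
  then obtain G tt where "tight_ctx G" "etyp G t' (Tt tt) b e m (csize u)" by blast
  with expand[OF hs_M.hyps(1) this(2)] show ?case by (auto simp: kb_def ke_def km_def)
qed


end
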